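(* In the setting below, there are constants $\Lambda>0$, $\sigma\ge0$ such that $|xx'|\le\Lambda|f(x)f(x')|+\sigma$ for all $x,x'\in X$, where $f=(f_a)_{a\in A}:X\to\prod_{a\in A}T_a$.
   Context: Setting: $Z$ is a bounded metric space with $\operatorname{diam}Z>0$, $\mu=\pi/\operatorname{diam}Z$, $A$ a set with $|A|=n+1$, and $\delta,\gamma\in(0,1)$, $\lambda\ge1$, $r\in(0,1)$ sufficiently small with $\lambda r<\delta$, $r<\operatorname{diam}Z$. $(\mathcal U_j)_{j\in\mathbb N}$ is a $\gamma$-separated characteristic sequence of open coverings of $Z$, each colored by $A$, $\mathcal U_j=\bigcup_{a\in A}\mathcal U_j^a$, with parameter $r$ and characteristic constants $\delta,\lambda$; that is: each $\mathcal U_j^a$ consists of pairwise disjoint open sets; (1) $\sup_{U\in\mathcal U_j}\operatorname{diam}U\le r^j$ and every ball of radius $\delta r^j$ in $Z$ is contained in some member of $\mathcal U_j$; (2) for every $a,j$ and $z\in Z$ there is $U\in\mathcal U_j^a$ with $\operatorname{dist}(z,U)\le\lambda r^j$; (3) for every $a$ and distinct $U\in\mathcal U_j^a$, $U'\in\mathcal U_{j'}^a$ with $j'\le j$, either $B_s(U)\cap U'=\emptyset$ or $B_s(U)\subset U'$, and if $j'<j$ there is $U''\in\mathcal U_j^a$ with $B_s(U'')\subset U'$, where $s=\gamma r^j$ and $B_s(U)=\{z:\operatorname{dist}(z,U)<s\}$. Trees: put $\mathcal U_0^a=\{Z\}$. $T_a$ is the tree (edges of length $1$, path metric) with vertex set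 $V^a=\bigsqcup_{j\ge0}V_j^a$, where $V_j^a$ is in bijection with $\mathcal U_j^a$ (root $v_a$ corresponds to $Z$); $v\in V_j^a$, $v'\in V_{j'}^a$, $j'<j$, are joined by an edge iff the corresponding sets satisfy $U\subset U'$ and $j'$ is the maximal level $<j$ for which some member of $\mathcal U_{j'}^a$ contains $U$. $\prod_{a\in A}T_a$ carries the $\ell^2$ product metric. Cone: $\operatorname{Co}(Z)=Z\times[0,\infty)/Z\times\{0\}$ with vertex $o$ and metric $|xx'|$ for $x=(z,t),x'=(z',t')$ equal to the length of the side $\bar x\bar x'$ of a triangle in $\mathrm H^2$ with sides $t,t'$ from $\bar o$ enclosing angle $\mu|zz'|$. Let $R=\ln(1/r)$, $Z_j=\{(z,jR):z\in Z\}$ for $j\ge1$, $Z_0=\{o\}$, $X=\bigcup_{j\ge0}Z_j$. Define $f_a:X\to T_a$ by $f_a(o)=v_a$ and, for $x=(z,jR)$, $j\ge1$, $f_a(x)$ is the vertex of $V_j^a$ corresponding to a (fixed choice of) member $U\in\mathcal U_j^a$ closest to $z$, i.e. minimizing $\operatorname{dist}(z,U)$. *)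

theory Defs
  imports "HOL-Analysis.Analysis"
begin

definition nbhd :: "'z::metric_space set \<Rightarrow> real \<Rightarrow> 'z set \<Rightarrow> 'z set" where
  "nbhd Z s U = {y \<in> Z. infdist y U < s}"

text \<open>gamma-separated characteristic sequence (U_j)_{j>=1} of open coverings of Z,
  colored by A, with parameter r and characteristic constants delta, lam.
  Uc j a is the colour class U_j^a.\<close>
definition char_seq ::
  "'z::metric_space set \<Rightarrow> 'a set \<Rightarrow> real \<Rightarrow> real \<Rightarrow> real \<Rightarrow> real \<Rightarrow> (nat \<Rightarrow> 'a \<Rightarrow> 'z set set) \<Rightarrow> bool" where
  "char_seq Z A r \<delta> lam \<gamma> Uc \<longleftrightarrow>
     (\<forall>j\<ge>1. \<forall>a\<in>A. (\<forall>U\<in>Uc j a. U \<noteq> {} \<and> U \<subseteq> Z \<and> openin (top_of_set Z) U)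
                     \<and> pairwise disjnt (Uc j a))
   \<and> (\<forall>j\<ge>1. Z = \<Union>(\<Union>a\<in>A. Uc j a))
   \<and> (\<forall>j\<ge>1. \<forall>a\<in>A. \<forall>U\<in>Uc j a. diameter U \<le> r ^ j)
   \<and> (\<forall>j\<ge>1. \<forall>z\<in>Z. \<exists>a\<in>A. \<exists>U\<in>Uc j a. ball z (\<delta> * r ^ j) \<inter> Z \<subseteq> U)
   \<and> (\<forall>j\<ge>1. \<forall>a\<in>A. \<forall>z\<in>Z. \<exists>U\<in>Uc j a. infdist z U \<le> lam * r ^ j)
   \<and> (\<forall>a\<in>A. \<forall>j j'. 1 \<le> j' \<and> j' \<le> j \<longrightarrow>
        (\<forall>U\<in>Uc j a. \<forall>U'\<in>Uc j' a. U \<noteq> U' \<longrightarrow>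
            nbhd Z (\<gamma> * r ^ j) U \<inter> U' = {} \<or> nbhd Z (\<gamma> * r ^ j) U \<subseteq> U')
      \<and> (j' < j \<longrightarrow> (\<forall>U'\<in>Uc j' a. \<exists>U''\<in>Uc j a. nbhd Z (\<gamma> * r ^ j) U'' \<subseteq> U')))"

definition lev :: "'z set \<Rightarrow> (nat \<Rightarrow> 'a \<Rightarrow> 'z set set) \<Rightarrow> nat \<Rightarrow> 'a \<Rightarrow> 'z set set" where
  "lev Z Uc j a = (if j = 0 then {Z} else Uc j a)"

definition tree_verts :: "'z set \<Rightarrow> (nat \<Rightarrow> 'a \<Rightarrow> 'z set set) \<Rightarrow> 'a \<Rightarrow> (nat \<times> 'z set) set" where
  "tree_verts Z Uc a = {(j, U). U \<in> lev Z Uc j a}"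

definition parent_edge :: "'z set \<Rightarrow> (nat \<Rightarrow> 'a \<Rightarrow> 'z set set) \<Rightarrow> 'a \<Rightarrow> (nat \<times> 'z set) \<Rightarrow> (nat \<times> 'z set) \<Rightarrow> bool" where
  "parent_edge Z Uc a v w \<longleftrightarrow>
     v \<in> tree_verts Z Uc a \<and> w \<in> tree_verts Z Uc a \<and>
     fst w < fst v \<and> snd v \<subseteq> snd w \<and>
     (\<forall>k. fst w < k \<and> k < fst v \<longrightarrow> \<not> (\<exists>W \<in> lev Z Uc k a. snd v \<subseteq> W))"

definition tree_edges :: "'z set \<Rightarrow> (nat \<Rightarrow> 'a \<Rightarrow> 'z set set) \<Rightarrow> 'a \<Rightarrow> ((nat \<times> 'z set) \<times> (nat \<times> 'z set)) set" where
  "tree_edges Z Uc a = {(v, w). parent_edge Z Uc a v w \<or> parent_edge Z Uc a w v}"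

definition tree_dist :: "'z set \<Rightarrow> (nat \<Rightarrow> 'a \<Rightarrow> 'z set set) \<Rightarrow> 'a \<Rightarrow> (nat \<times> 'z set) \<Rightarrow> (nat \<times> 'z set) \<Rightarrow> real" where
  "tree_dist Z Uc a v w = real (LEAST n. (v, w) \<in> (tree_edges Z Uc a) ^^ n)"

definition closest_choice :: "'z::metric_space set \<Rightarrow> 'a set \<Rightarrow> (nat \<Rightarrow> 'a \<Rightarrow> 'z set set) \<Rightarrow> ('a \<Rightarrow> nat \<Rightarrow> 'z \<Rightarrow> 'z set) \<Rightarrow> bool" where
  "closest_choice Z A Uc sel \<longleftrightarrow>
     (\<forall>a\<in>A. \<forall>j\<ge>1. \<forall>z\<in>Z. sel a j z \<in> Uc j a \<and> (\<forall>U\<in>Uc j a. infdist z (sel a j z) \<le> infdist z U))"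

text \<open>The map f_a : X \<rightarrow> T_a. A point (z, j) stands for (z, jR) in the cone; for j = 0 it is the vertex o.\<close>
definition fmap :: "'z set \<Rightarrow> ('a \<Rightarrow> nat \<Rightarrow> 'z \<Rightarrow> 'z set) \<Rightarrow> 'a \<Rightarrow> 'z \<times> nat \<Rightarrow> nat \<times> 'z set" where
  "fmap Z sel a x = (if snd x = 0 then (0, Z) else (snd x, sel a (snd x) (fst x)))"

definition prod_tree_dist :: "'z set \<Rightarrow> 'a set \<Rightarrow> (nat \<Rightarrow> 'a \<Rightarrow> 'z set set) \<Rightarrow> ('a \<Rightarrow> nat \<Rightarrow> 'z \<Rightarrow> 'z set) \<Rightarrow> 'z \<times> nat \<Rightarrow> 'z \<times> nat \<Rightarrow> real" where
  "prod_tree_dist Z A Uc sel x x' =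
     sqrt (\<Sum>a\<in>A. (tree_dist Z Uc a (fmap Z sel a x) (fmap Z sel a x')) ^ 2)"

text \<open>Metric of the hyperbolic cone Co(Z) (mu = pi / diam Z): by the hyperbolic law of cosines,
  |xx'| for x = (z,t), x' = (z',t') is arcosh(cosh t cosh t' - sinh t sinh t' cos(mu |zz'|)).\<close>
definition cone_dist :: "real \<Rightarrow> 'z::metric_space \<Rightarrow> real \<Rightarrow> 'z \<Rightarrow> real \<Rightarrow> real" where
  "cone_dist \<mu> z t z' t' = arcosh (cosh t * cosh t' - sinh t * sinh t' * cos (\<mu> * dist z z'))"

end

theory Submission
  imports Defs
begin


lemma one_minus_cos_le: "1 - cos (x::real) \<le> x^2 / 2"
proof -
  have "1 - cos x = 2 * sin (x/2) ^ 2" using cos_double_sin[of "x/2"] by simp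
  also have "sin (x/2) ^ 2 \<le> (x/2)^2"
    using abs_sin_x_le_abs_x[of "x/2"] by (metis abs_ge_zero power2_abs power_mono)
  finally show ?thesis by (simp add: power_divide)
qed

lemma cone_bound:
  fixes t t' \<theta> M :: real
  assumes t0: "0 \<le> t" and t0': "0 \<le> t'" and M1: "\<bar>t - t'\<bar> \<le> M" and M2: "exp (t + t') * \<theta>^2 \<le> exp M"
  shows "arcosh (cosh t * cosh t' - sinh t * sinh t' * cos \<theta>) \<le> M + ln 3"
proof -
  define X where "X = cosh t * cosh t' - sinh t * sinh t' * cos \<theta>"
  have Xe: "X = cosh (t - t') + sinh t * sinh t' * (1 - cos \<theta>)"
    unfolding X_def cosh_diff by (simp add: algebra_simps)
  have s0: "0 \<le> sinh t * sinh t'" using t0 t0' by simp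
  have c0: "0 \<le> 1 - cos \<theta>" by simp
  have X1: "1 \<le> X" unfolding Xe using cosh_real_ge_1[of "t-t'"] s0 c0
    by (simp add: add_increasing2)
  have sh: "sinh x \<le> exp x / 2" for x :: real
    unfolding sinh_def by (simp add: divide_right_mono)
  have ch: "cosh (t - t') \<le> exp M"
  proof -
    have "cosh (t - t') = cosh \<bar>t - t'\<bar>" by simp
    also have "\<dots> \<le> exp \<bar>t - t'\<bar>" unfolding cosh_def
      using exp_ge_zero[of "\<bar>t-t'\<bar>"] by (simp add: exp_minus_inverse)
    also have "\<dots> \<le> exp M" using M1 by simp
    finally show ?thesis .
  qed
  have "sinh t * sinh t' \<le> (exp t / 2) * (exp t' / 2)"
    using sh[of t] sh[of t'] t0 t0' by (intro mult_mono) auto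
  also have "\<dots> = exp (t + t') / 4" by (simp add: exp_add)
  finally have ss: "sinh t * sinh t' \<le> exp (t + t') / 4" .
  have "sinh t * sinh t' * (1 - cos \<theta>) \<le> (exp (t + t') / 4) * (\<theta>^2/2)"
    using ss one_minus_cos_le[of \<theta>] s0 c0 by (intro mult_mono) auto
  also have "\<dots> = exp (t + t') * \<theta>^2 / 8" by simp
  also have "\<dots> \<le> exp M / 8" using M2 by simp
  finally have "X \<le> exp M + exp M / 8" unfolding Xe using ch by simp
  hence X2: "2 * X \<le> 3 * exp M" using exp_gt_zero[of M] by linarith
  have "arcosh X = ln (X + sqrt (X^2 - 1))" using X1 arcosh_real_def by blast
  also have "\<dots> \<le> ln (2 * X)"
  proof -
    have "sqrt (X^2 - 1) \<le> sqrt (X^2)" by (intro real_sqrt_le_mono) simp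
    hence "sqrt (X^2 - 1) \<le> X" using X1 by simp
    moreover have "0 < X + sqrt (X^2 - 1)" using X1 by (smt (verit) real_sqrt_ge_zero one_le_power)
    ultimately show ?thesis by simp
  qed
  also have "\<dots> \<le> ln (3 * exp M)" using X2 X1 by simp
  also have "\<dots> = M + ln 3" by (simp add: ln_mult)
  finally show ?thesis unfolding X_def .
qed




definition Gc :: "(nat \<Rightarrow> 'a \<Rightarrow> 'z set set) \<Rightarrow> 'a \<Rightarrow> nat \<Rightarrow> ('z set \<Rightarrow> bool) \<Rightarrow> nat \<times> 'z set \<Rightarrow> nat" where
  "Gc Uc a K P u = card {l. K < l \<and> l \<le> fst u \<and> (\<exists>W\<in>Uc l a. snd u \<subseteq> W \<and> P W)}"

context
  fixes Z :: "'z::metric_space set" and A :: "'a set" and r \<delta> lam \<gamma> :: real and Uc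
  assumes cs: "char_seq Z A r \<delta> lam \<gamma> Uc" and rpos: "0 < r" and gpos: "0 < \<gamma>"
begin

lemma cs_ne: "1 \<le> j \<Longrightarrow> a \<in> A \<Longrightarrow> U \<in> Uc j a \<Longrightarrow> U \<noteq> {} \<and> U \<subseteq> Z"
  using conjunct1[OF cs[unfolded char_seq_def]] by blast

lemma cs_disj: "1 \<le> j \<Longrightarrow> a \<in> A \<Longrightarrow> pairwise disjnt (Uc j a)"
  using conjunct1[OF cs[unfolded char_seq_def]] by blast

lemma cs_diam: "1 \<le> j \<Longrightarrow> a \<in> A \<Longrightarrow> U \<in> Uc j a \<Longrightarrow> diameter U \<le> r ^ j"
  using conjunct1[OF conjunct2[OF conjunct2[OF cs[unfolded char_seq_def]]]] by blast

lemma cs_ball: "1 \<le> j \<Longrightarrow> z \<in> Z \<Longrightarrow> \<exists>a\<in>A. \<exists>U\<in>Uc j a. ball z (\<delta> * r ^ j) \<inter> Z \<subseteq> U"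
  using conjunct1[OF conjunct2[OF conjunct2[OF conjunct2[OF cs[unfolded char_seq_def]]]]] by blast

lemma cs_dense: "1 \<le> j \<Longrightarrow> a \<in> A \<Longrightarrow> z \<in> Z \<Longrightarrow> \<exists>U\<in>Uc j a. infdist z U \<le> lam * r ^ j"
  using conjunct1[OF conjunct2[OF conjunct2[OF conjunct2[OF conjunct2[OF cs[unfolded char_seq_def]]]]]] by blast

lemma cs_nest0: "a \<in> A \<Longrightarrow> 1 \<le> j' \<Longrightarrow> j' \<le> j \<Longrightarrow> U \<in> Uc j a \<Longrightarrow> U' \<in> Uc j' a \<Longrightarrow> U \<noteq> U' \<Longrightarrow>
   nbhd Z (\<gamma> * r ^ j) U \<inter> U' = {} \<or> nbhd Z (\<gamma> * r ^ j) U \<subseteq> U'"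
  using conjunct2[OF conjunct2[OF conjunct2[OF conjunct2[OF conjunct2[OF cs[unfolded char_seq_def]]]]]] by blast

lemma nest:
  assumes a: "a \<in> A" and l: "1 \<le> l" "l \<le> j" and U: "U \<in> Uc j a" and W: "W \<in> Uc l a"
    and S: "S \<subseteq> U" "S \<subseteq> W" "S \<noteq> {}"
  shows "U \<subseteq> W"
proof (cases "U = W")
  case True then show ?thesis by simp
next
  case False
  have s: "0 < \<gamma> * r ^ j" using gpos rpos by simp
  have UZ: "U \<subseteq> Z" using cs_ne[of j a U] l a U by auto
  have sub: "U \<subseteq> nbhd Z (\<gamma> * r ^ j) U" using UZ s unfolding nbhd_def by auto
  from S obtain y where y: "y \<in> S" by auto
  have "y \<in> nbhd Z (\<gamma> * r ^ j) U \<inter> W" using y S sub by auto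
  hence "nbhd Z (\<gamma> * r ^ j) U \<subseteq> W" using cs_nest0[OF a l(1) l(2) U W False] by auto
  thus ?thesis using sub by auto
qed

lemma same_level:
  assumes a: "a \<in> A" and j: "1 \<le> j" and U: "U \<in> Uc j a" and W: "W \<in> Uc j a"
    and S: "S \<subseteq> U" "S \<subseteq> W" "S \<noteq> {}"
  shows "U = W"
  using cs_disj[OF j a] U W S unfolding pairwise_def disjnt_def by blast

lemma step_set:
  assumes a: "a \<in> A" and pe: "parent_edge Z Uc a (j,U) (j',U')"
  shows "{l. K<l \<and> l \<le> j \<and> (\<exists>W\<in>Uc l a. U \<subseteq> W \<and> P W)} =
         {l. K<l \<and> l \<le> j' \<and> (\<exists>W\<in>Uc l a. U' \<subseteq> W \<and> P W)} \<union> (if K < j \<and> P U then {j} else {})"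
proof -
  from pe have j'j: "j' < j" and UU': "U \<subseteq> U'"
    and gap: "\<forall>k. j'<k \<and> k<j \<longrightarrow> \<not>(\<exists>W\<in>lev Z Uc k a. U \<subseteq> W)"
    and vU: "U \<in> lev Z Uc j a" and vU': "U' \<in> lev Z Uc j' a"
    unfolding parent_edge_def tree_verts_def by auto
  have j1: "1 \<le> j" using j'j by simp
  have UUc: "U \<in> Uc j a" using vU j1 unfolding lev_def by simp
  have Une: "U \<noteq> {}" using cs_ne[OF j1 a UUc] by simp
  show ?thesis
  proof (rule set_eqI, rule iffI)
    fix l assume "l \<in> {l. K<l \<and> l \<le> j \<and> (\<exists>W\<in>Uc l a. U \<subseteq> W \<and> P W)}"
    then obtain W where l: "K < l" "l \<le> j" and W: "W \<in> Uc l a" "U \<subseteq> W" "P W" by auto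
    show "l \<in> {l. K<l \<and> l \<le> j' \<and> (\<exists>W\<in>Uc l a. U' \<subseteq> W \<and> P W)} \<union> (if K < j \<and> P U then {j} else {})"
    proof (cases "l = j")
      case True
      then have "W = U" using same_level[OF a j1, of W U U] W UUc Une by auto
      then show ?thesis using True W l by auto
    next
      case False
      have l1: "1 \<le> l" using l by simp
      have "l \<le> j'"
      proof (rule ccontr)
        assume "\<not> l \<le> j'"
        hence "j' < l \<and> l < j" using False l by simp
        moreover have "W \<in> lev Z Uc l a" using W l1 unfolding lev_def by simp
        ultimately show False using gap W by blast
      qed
      hence j'1: "1 \<le> j'" using l1 by simp
      have U'Uc: "U' \<in> Uc j' a" using vU' j'1 unfolding lev_def by simp
      have "U' \<subseteq> W" using nest[OF a l1 \<open>l \<le> j'\<close> U'Uc W(1), of U] UU' W Une by auto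
      thus ?thesis using \<open>l \<le> j'\<close> l W by auto
    qed
  next
    fix l assume "l \<in> {l. K<l \<and> l \<le> j' \<and> (\<exists>W\<in>Uc l a. U' \<subseteq> W \<and> P W)} \<union> (if K < j \<and> P U then {j} else {})"
    then show "l \<in> {l. K<l \<and> l \<le> j \<and> (\<exists>W\<in>Uc l a. U \<subseteq> W \<and> P W)}"
      using UU' j'j UUc by (auto split: if_splits)
  qed
qed

lemma Gc_step:
  assumes a: "a \<in> A" and pe: "parent_edge Z Uc a (j,U) (j',U')"
  shows "Gc Uc a K P (j,U) = Gc Uc a K P (j',U') + (if K < j \<and> P U then 1 else 0)"
proof -
  have j'j: "j' < j" using pe unfolding parent_edge_def by auto
  have fin: "finite {l. K<l \<and> l \<le> j' \<and> (\<exists>W\<in>Uc l a. U' \<subseteq> W \<and> P W)}" by (rule finite_subset[of _ "{..j'}"]) auto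
  have nin: "j \<notin> {l. K<l \<and> l \<le> j' \<and> (\<exists>W\<in>Uc l a. U' \<subseteq> W \<and> P W)}" using j'j by auto
  show ?thesis unfolding Gc_def fst_conv snd_conv step_set[OF a pe]
    using fin nin by (auto simp: card_insert_if)
qed


lemma Phi_edge:
  assumes a: "a \<in> A" and PQ: "\<And>U. \<not> (P U \<and> Q U)"
    and e: "(u, u') \<in> tree_edges Z Uc a"
  shows "\<bar>(real (Gc Uc a K P u) - real (Gc Uc a K Q u)) - (real (Gc Uc a K P u') - real (Gc Uc a K Q u'))\<bar> \<le> 1"
proof -
  have gen: "\<bar>(real (Gc Uc a K P x) - real (Gc Uc a K Q x)) - (real (Gc Uc a K P y) - real (Gc Uc a K Q y))\<bar> \<le> 1"
    if pe: "parent_edge Z Uc a x y" for x y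
  proof -
    obtain j U where x: "x = (j,U)" by fastforce
    obtain j' U' where y: "y = (j',U')" by fastforce
    have "Gc Uc a K P x = Gc Uc a K P y + (if K < j \<and> P U then 1 else 0)"
      using Gc_step[OF a, of j U j' U' K P] pe x y by simp
    moreover have "Gc Uc a K Q x = Gc Uc a K Q y + (if K < j \<and> Q U then 1 else 0)"
      using Gc_step[OF a, of j U j' U' K Q] pe x y by simp
    ultimately show ?thesis using PQ[of U] by auto
  qed
  from e have "parent_edge Z Uc a u u' \<or> parent_edge Z Uc a u' u" unfolding tree_edges_def by auto
  thus ?thesis using gen[of u u'] gen[of u' u] by auto
qed

lemma path_bound:
  fixes \<Phi> :: "'v \<Rightarrow> real"
  assumes L: "\<And>u u'. (u, u') \<in> E \<Longrightarrow> \<bar>\<Phi> u - \<Phi> u'\<bar> \<le> 1"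
  shows "(v, w) \<in> E ^^ m \<Longrightarrow> \<bar>\<Phi> v - \<Phi> w\<bar> \<le> real m"
proof (induction m arbitrary: w)
  case 0 then show ?case by simp
next
  case (Suc m)
  from Suc.prems obtain u where u: "(v, u) \<in> E ^^ m" "(u, w) \<in> E" by (rule relpow_Suc_E)
  have "\<bar>\<Phi> v - \<Phi> u\<bar> \<le> real m" using Suc.IH u(1) .
  moreover have "\<bar>\<Phi> u - \<Phi> w\<bar> \<le> 1" using L u(2) .
  ultimately show ?case by simp
qed

lemma reach_root:
  assumes a: "a \<in> A"
  shows "(j, U) \<in> tree_verts Z Uc a \<Longrightarrow> ((j, U), (0, Z)) \<in> (tree_edges Z Uc a)\<^sup>*"
proof (induction j arbitrary: U rule: less_induct)
  case (less j)
  show ?case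
  proof (cases "j = 0")
    case True
    then show ?thesis using less.prems unfolding tree_verts_def lev_def by simp
  next
    case False
    hence j1: "1 \<le> j" by simp
    have UUc: "U \<in> Uc j a" using less.prems j1 unfolding tree_verts_def lev_def by simp
    have UZ: "U \<subseteq> Z" using cs_ne[OF j1 a UUc] by simp
    define S where "S = {k. k < j \<and> (\<exists>W\<in>lev Z Uc k a. U \<subseteq> W)}"
    have finS: "finite S" unfolding S_def by (rule finite_subset[of _ "{..<j}"]) auto
    have "0 \<in> S" unfolding S_def lev_def using UZ j1 by simp
    hence neS: "S \<noteq> {}" by auto
    define k where "k = Max S"
    have kS: "k \<in> S" unfolding k_def using finS neS by simp
    then obtain W where kj: "k < j" and W: "W \<in> lev Z Uc k a" "U \<subseteq> W" unfolding S_def by auto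
    have kmax: "\<forall>l. k < l \<and> l < j \<longrightarrow> \<not> (\<exists>W\<in>lev Z Uc l a. U \<subseteq> W)"
    proof (intro allI impI notI)
      fix l assume "k < l \<and> l < j" "\<exists>W\<in>lev Z Uc l a. U \<subseteq> W"
      hence "l \<in> S" unfolding S_def by auto
      hence "l \<le> k" unfolding k_def using finS by simp
      thus False using \<open>k < l \<and> l < j\<close> by simp
    qed
    have pe: "parent_edge Z Uc a (j, U) (k, W)"
      unfolding parent_edge_def using less.prems W kj kmax unfolding tree_verts_def by auto
    hence e: "((j, U), (k, W)) \<in> tree_edges Z Uc a" unfolding tree_edges_def by auto
    have "(k, W) \<in> tree_verts Z Uc a" using W unfolding tree_verts_def by simp
    hence "((k, W), (0, Z)) \<in> (tree_edges Z Uc a)\<^sup>*" using less.IH kj by blast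
    thus ?thesis by (rule converse_rtrancl_into_rtrancl[OF e])
  qed
qed

lemma edges_sym: "(u, u') \<in> tree_edges Z Uc a \<Longrightarrow> (u', u) \<in> tree_edges Z Uc a"
  unfolding tree_edges_def by auto

lemma connected_verts:
  assumes a: "a \<in> A" and v: "v \<in> tree_verts Z Uc a" and w: "w \<in> tree_verts Z Uc a"
  shows "\<exists>n. (v, w) \<in> (tree_edges Z Uc a) ^^ n"
proof -
  have sym: "(tree_edges Z Uc a)\<inverse> = tree_edges Z Uc a" using edges_sym by auto
  have "(v, (0, Z)) \<in> (tree_edges Z Uc a)\<^sup>*" using reach_root[OF a, of "fst v" "snd v"] v by simp
  moreover have "(w, (0, Z)) \<in> (tree_edges Z Uc a)\<^sup>*" using reach_root[OF a, of "fst w" "snd w"] w by simp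
  hence "((0, Z), w) \<in> ((tree_edges Z Uc a)\<inverse>)\<^sup>*" by (simp add: rtrancl_converse)
  hence "((0, Z), w) \<in> (tree_edges Z Uc a)\<^sup>*" using sym by simp
  ultimately have "(v, w) \<in> (tree_edges Z Uc a)\<^sup>*" by simp
  thus ?thesis using rtrancl_power by blast
qed

lemma tree_dist_lower:
  assumes a: "a \<in> A" and PQ: "\<And>U. \<not> (P U \<and> Q U)"
    and v: "v \<in> tree_verts Z Uc a" and w: "w \<in> tree_verts Z Uc a"
  shows "\<bar>(real (Gc Uc a K P v) - real (Gc Uc a K Q v)) - (real (Gc Uc a K P w) - real (Gc Uc a K Q w))\<bar>
         \<le> tree_dist Z Uc a v w"
proof -
  define n where "n = (LEAST n. (v, w) \<in> (tree_edges Z Uc a) ^^ n)"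
  have "(v, w) \<in> (tree_edges Z Uc a) ^^ n"
    unfolding n_def using connected_verts[OF a v w] by (rule LeastI_ex)
  moreover define \<Phi> where "\<Phi> = (\<lambda>u. real (Gc Uc a K P u) - real (Gc Uc a K Q u))"
  ultimately have "\<bar>\<Phi> v - \<Phi> w\<bar> \<le> real n"
  proof -
    have L: "\<And>u u'. (u,u') \<in> tree_edges Z Uc a \<Longrightarrow> \<bar>\<Phi> u - \<Phi> u'\<bar> \<le> 1"
      using Phi_edge[OF a, where P=P and Q=Q and K=K, OF PQ] unfolding \<Phi>_def by simp
    show ?thesis by (rule path_bound[OF L \<open>(v, w) \<in> tree_edges Z Uc a ^^ n\<close>])
  qed
  thus ?thesis unfolding tree_dist_def n_def \<Phi>_def by simp
qed

lemma relpow_sym: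
  assumes "\<And>x y. (x, y) \<in> R \<Longrightarrow> (y, x) \<in> R"
  shows "(x, y) \<in> R ^^ n \<Longrightarrow> (y, x) \<in> R ^^ n"
proof (induction n arbitrary: y)
  case 0 then show ?case by simp
next
  case (Suc n)
  from Suc.prems obtain u where u: "(x, u) \<in> R ^^ n" "(u, y) \<in> R" by (rule relpow_Suc_E)
  show ?case using relpow_Suc_I2[OF assms[OF u(2)] Suc.IH[OF u(1)]] .
qed

lemma tree_dist_sym: "tree_dist Z Uc a v w = tree_dist Z Uc a w v"
proof -
  have "\<And>n. (v, w) \<in> (tree_edges Z Uc a) ^^ n \<longleftrightarrow> (w, v) \<in> (tree_edges Z Uc a) ^^ n"
  proof -
    fix n show "(v, w) \<in> (tree_edges Z Uc a) ^^ n \<longleftrightarrow> (w, v) \<in> (tree_edges Z Uc a) ^^ n"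
      using relpow_sym[of "tree_edges Z Uc a", OF edges_sym] by metis
  qed
  thus ?thesis unfolding tree_dist_def by simp
qed

end



lemma infdist_point_lt:
  fixes x :: "'z::metric_space"
  assumes "A \<noteq> {}" "infdist x A < e"
  shows "\<exists>y\<in>A. dist x y < e"
proof -
  have "(INF a\<in>A. dist x a) < e" using assms infdist_notempty by metis
  moreover have "bdd_below ((\<lambda>a. dist x a) ` A)" by (rule bdd_belowI[of _ 0]) auto
  ultimately show ?thesis using cINF_less_iff[OF assms(1)] by blast
qed

lemma dist_le_infdist_diam:
  fixes z p :: "'z::metric_space"
  assumes "bounded U" "p \<in> U"
  shows "dist z p \<le> infdist z U + diameter U"
proof -
  have "U \<noteq> {}" using assms by auto
  have "dist z p - diameter U \<le> (INF y\<in>U. dist z y)"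
  proof (rule cINF_greatest[OF \<open>U \<noteq> {}\<close>])
    fix y assume "y \<in> U"
    have "dist y p \<le> diameter U" using diameter_bounded_bound[OF assms(1) \<open>y \<in> U\<close> assms(2)] .
    thus "dist z p - diameter U \<le> dist z y" using dist_triangle[of z p y] by simp
  qed
  thus ?thesis using infdist_notempty[OF \<open>U \<noteq> {}\<close>] by simp
qed

lemma infdist_lower:
  fixes z :: "'z::metric_space"
  assumes "U \<noteq> {}" "\<And>y. y \<in> U \<Longrightarrow> m \<le> dist z y"
  shows "m \<le> infdist z U"
  using cINF_greatest[OF assms] infdist_notempty[OF assms(1)] by simp

context
  fixes Z :: "'z::metric_space set" and A :: "'a set" and r \<delta> lam \<gamma> :: real and Uc sel
  assumes cs: "char_seq Z A r \<delta> lam \<gamma> Uc" and rpos: "0 < r" and gpos: "0 < \<gamma>"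
    and r1: "r < 1" and lam1: "1 \<le> lam" and lr: "lam * r < \<delta>" and bZ: "bounded Z"
    and cc: "closest_choice Z A Uc sel"
begin

lemma sel_close:
  assumes a: "a \<in> A" and J: "1 \<le> J" and z: "z \<in> Z"
  shows "sel a J z \<in> Uc J a \<and> infdist z (sel a J z) \<le> lam * r ^ J"
proof -
  have 1: "sel a J z \<in> Uc J a" "\<forall>U\<in>Uc J a. infdist z (sel a J z) \<le> infdist z U"
    using cc a J z unfolding closest_choice_def by auto
  obtain U where "U \<in> Uc J a" "infdist z U \<le> lam * r ^ J" using cs_dense[OF cs rpos gpos J a z] by blast
  thus ?thesis using 1 by force
qed

lemma sel_ne: "a \<in> A \<Longrightarrow> 1 \<le> J \<Longrightarrow> z \<in> Z \<Longrightarrow> sel a J z \<noteq> {} \<and> sel a J z \<subseteq> Z"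
  using sel_close[of a J z] cs_ne[OF cs rpos gpos, of J a "sel a J z"] by blast

lemma contain:
  assumes z: "z \<in> Z" and l1: "1 \<le> l" and lJ: "l < J"
  shows "\<exists>b\<in>A. \<exists>W\<in>Uc l b. sel b J z \<subseteq> W"
proof -
  obtain b W where b: "b \<in> A" and W: "W \<in> Uc l b" and bW: "ball z (\<delta> * r ^ l) \<inter> Z \<subseteq> W"
    using cs_ball[OF cs rpos gpos l1 z] by blast
  have J1: "1 \<le> J" using l1 lJ by simp
  define U where "U = sel b J z"
  have U: "U \<in> Uc J b" "infdist z U \<le> lam * r ^ J" using sel_close[OF b J1 z] unfolding U_def by auto
  have Une: "U \<noteq> {}" "U \<subseteq> Z" using sel_ne[OF b J1 z] unfolding U_def by auto
  have "r ^ J \<le> r ^ Suc l" using lJ rpos r1 by (intro power_decreasing) auto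
  hence "lam * r ^ J \<le> lam * r * r ^ l" using lam1 by (simp add: mult_left_mono)
  also have "\<dots> < \<delta> * r ^ l" using lr rpos by simp
  finally have "infdist z U < \<delta> * r ^ l" using U by simp
  then obtain y where y: "y \<in> U" "dist z y < \<delta> * r ^ l" using infdist_point_lt[OF Une(1)] by blast
  have "y \<in> W" using y Une bW by auto
  have "U \<subseteq> W" using nest[OF cs rpos gpos b l1 _ U(1) W, of "{y}"] y \<open>y \<in> W\<close> lJ by auto
  thus ?thesis using b W unfolding U_def by blast
qed

lemma Gc_zero: "fst u \<le> K \<Longrightarrow> Gc Uc a K P u = 0"
  unfolding Gc_def by simp

lemma fmap_pos: "1 \<le> J \<Longrightarrow> fmap Z sel a (z, J) = (J, sel a J z)"
  unfolding fmap_def by simp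

lemma fmap_verts: "a \<in> A \<Longrightarrow> z \<in> Z \<Longrightarrow> fmap Z sel a (z, J) \<in> tree_verts Z Uc a"
  unfolding fmap_def tree_verts_def lev_def using sel_close by auto

lemma sum_Gc_lower:
  assumes finA: "finite A" and z: "z \<in> Z" and J: "1 \<le> J"
  shows "real (J - Suc K) \<le> (\<Sum>a\<in>A. real (Gc Uc a K (\<lambda>_. True) (fmap Z sel a (z, J))))"
proof -
  define S where "S a = {l. K < l \<and> l \<le> J \<and> (\<exists>W\<in>Uc l a. sel a J z \<subseteq> W \<and> True)}" for a
  have sub: "{K<..<J} \<subseteq> (\<Union>a\<in>A. S a)"
  proof
    fix l assume "l \<in> {K<..<J}"
    hence l: "K < l" "l < J" by auto
    then obtain b W where "b \<in> A" "W \<in> Uc l b" "sel b J z \<subseteq> W" using contain[OF z, of l J] by auto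
    thus "l \<in> (\<Union>a\<in>A. S a)" unfolding S_def using l by auto
  qed
  have "card {K<..<J} \<le> card (\<Union>a\<in>A. S a)"
  proof (rule card_mono[OF _ sub])
    have "\<And>a. S a \<subseteq> {..J}" unfolding S_def by auto
    hence "\<And>a. finite (S a)" using finite_subset by blast
    thus "finite (\<Union>a\<in>A. S a)" using finA by blast
  qed
  also have "\<dots> \<le> (\<Sum>a\<in>A. card (S a))" by (rule card_UN_le[OF finA])
  finally have "J - Suc K \<le> (\<Sum>a\<in>A. card (S a))" by simp
  hence "real (J - Suc K) \<le> real (\<Sum>a\<in>A. card (S a))" by linarith
  also have "\<dots> = (\<Sum>a\<in>A. real (Gc Uc a K (\<lambda>_. True) (fmap Z sel a (z, J))))"
    unfolding of_nat_sum Gc_def S_def fmap_pos[OF J] by simp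
  finally show ?thesis .
qed

lemma far_noshare:
  assumes a: "a \<in> A" and z: "z \<in> Z" and z': "z' \<in> Z" and j: "1 \<le> j" and j': "1 \<le> j'"
    and Kj: "K < j" and Kj': "K < j'" and far: "(2 * lam + 2) * r ^ (K + 1) < dist z z'"
    and p: "p \<in> sel a j z" and l: "K < l" and W: "W \<in> Uc l a" "p \<in> W" "sel a j' z' \<subseteq> W"
  shows False
proof -
  define U where "U = sel a j z"
  define U' where "U' = sel a j' z'"
  have U: "U \<in> Uc j a" "infdist z U \<le> lam * r ^ j" "U \<noteq> {}" "U \<subseteq> Z"
    using sel_close[OF a j z] sel_ne[OF a j z] unfolding U_def by auto
  have U': "U' \<in> Uc j' a" "infdist z' U' \<le> lam * r ^ j'" "U' \<noteq> {}" "U' \<subseteq> Z"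
    using sel_close[OF a j' z'] sel_ne[OF a j' z'] unfolding U'_def by auto
  have l1: "1 \<le> l" using l by simp
  have WZ: "W \<subseteq> Z" using cs_ne[OF cs rpos gpos l1 a W(1)] by simp
  have bU: "bounded U" using bZ U(4) bounded_subset by blast
  have bW: "bounded W" using bZ WZ bounded_subset by blast
  have dp: "dist z p \<le> lam * r ^ j + r ^ j"
    using dist_le_infdist_diam[OF bU, of p z] p U(2) cs_diam[OF cs rpos gpos j a U(1)] unfolding U_def by simp
  have dW: "diameter W \<le> r ^ l" using cs_diam[OF cs rpos gpos l1 a W(1)] .
  have "dist z z' - dist z p - r ^ l \<le> infdist z' U'"
  proof (rule infdist_lower[OF U'(3)])
    fix q assume q: "q \<in> U'"
    have "dist p q \<le> diameter W" using diameter_bounded_bound[OF bW W(2)] q W(3) unfolding U'_def by auto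
    moreover have "dist z z' \<le> dist z p + dist p q + dist q z'"
      using dist_triangle[of z z' p] dist_triangle[of p z' q] by simp
    ultimately show "dist z z' - dist z p - r ^ l \<le> dist z' q" using dW by (simp add: dist_commute)
  qed
  hence ineq: "dist z z' \<le> lam * r ^ j + r ^ j + r ^ l + lam * r ^ j'" using dp U'(2) by simp
  have p1: "r ^ j \<le> r ^ (K+1)" "r ^ j' \<le> r ^ (K+1)" "r ^ l \<le> r ^ (K+1)"
    using Kj Kj' l rpos r1 power_decreasing[of "K+1" _ r] by auto
  have "lam * r ^ j + r ^ j + r ^ l + lam * r ^ j' \<le> lam * r ^ (K+1) + r ^ (K+1) + r ^ (K+1) + lam * r ^ (K+1)"
    using p1 lam1 by (intro add_mono mult_left_mono) auto
  also have "\<dots> = (2 * lam + 2) * r ^ (K + 1)" by (simp add: algebra_simps)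
  finally show False using ineq far by simp
qed

lemma far_color:
  assumes a: "a \<in> A" and z: "z \<in> Z" and z': "z' \<in> Z" and j: "1 \<le> j" and j': "1 \<le> j'"
    and Kj: "K < j" and Kj': "K < j'" and far: "(2 * lam + 2) * r ^ (K + 1) < dist z z'"
  shows "real (Gc Uc a K (\<lambda>_. True) (fmap Z sel a (z, j))) + real (Gc Uc a K (\<lambda>_. True) (fmap Z sel a (z', j')))
         \<le> tree_dist Z Uc a (fmap Z sel a (z, j)) (fmap Z sel a (z', j'))"
proof -
  obtain p where p: "p \<in> sel a j z" using sel_ne[OF a j z] by blast
  define P where "P = (\<lambda>W. p \<in> W)"
  define Q where "Q = (\<lambda>W. p \<notin> W)"
  have PQ: "\<And>U. \<not> (P U \<and> Q U)" unfolding P_def Q_def by simp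
  define v where "v = fmap Z sel a (z, j)"
  define w where "w = fmap Z sel a (z', j')"
  have v: "v = (j, sel a j z)" unfolding v_def using fmap_pos[OF j] by simp
  have w: "w = (j', sel a j' z')" unfolding w_def using fmap_pos[OF j'] by simp
  have 1: "Gc Uc a K Q v = 0"
  proof -
    have "{l. K < l \<and> l \<le> fst v \<and> (\<exists>W\<in>Uc l a. snd v \<subseteq> W \<and> Q W)} = {}"
      unfolding v Q_def using p by auto
    thus ?thesis unfolding Gc_def by (simp only: card.empty)
  qed
  have 2: "Gc Uc a K P v = Gc Uc a K (\<lambda>_. True) v" unfolding Gc_def v P_def using p
    by (intro arg_cong[where f=card]) auto
  have ns: "\<And>l W. K < l \<Longrightarrow> W \<in> Uc l a \<Longrightarrow> p \<in> W \<Longrightarrow> sel a j' z' \<subseteq> W \<Longrightarrow> False"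
    using far_noshare[OF a z z' j j' Kj Kj' far p] by blast
  have 3: "Gc Uc a K P w = 0"
  proof -
    have "{l. K < l \<and> l \<le> fst w \<and> (\<exists>W\<in>Uc l a. snd w \<subseteq> W \<and> P W)} = {}"
      unfolding w P_def using ns by auto
    thus ?thesis unfolding Gc_def by (simp only: card.empty)
  qed
  have 4: "Gc Uc a K Q w = Gc Uc a K (\<lambda>_. True) w" unfolding Gc_def w Q_def using ns
    by (intro arg_cong[where f=card]) auto
  have "\<bar>(real (Gc Uc a K P v) - real (Gc Uc a K Q v)) - (real (Gc Uc a K P w) - real (Gc Uc a K Q w))\<bar>
         \<le> tree_dist Z Uc a v w"
    unfolding v_def w_def by (rule tree_dist_lower[OF cs rpos gpos a PQ fmap_verts[OF a z] fmap_verts[OF a z']])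
  thus ?thesis using 1 2 3 4 unfolding v_def w_def by simp
qed

lemma close_color:
  assumes a: "a \<in> A" and z: "z \<in> Z" and z': "z' \<in> Z"
  shows "real (Gc Uc a K (\<lambda>_. True) (fmap Z sel a (z, j))) - real (Gc Uc a K (\<lambda>_. True) (fmap Z sel a (z', j')))
         \<le> tree_dist Z Uc a (fmap Z sel a (z, j)) (fmap Z sel a (z', j'))"
proof -
  have PQ: "\<And>U. \<not> ((\<lambda>_. True) U \<and> (\<lambda>_. False) U)" by simp
  have 0: "Gc Uc a K (\<lambda>_. False) u = 0" for u unfolding Gc_def by simp
  have "\<bar>(real (Gc Uc a K (\<lambda>_. True) (fmap Z sel a (z, j))) - real (Gc Uc a K (\<lambda>_. False) (fmap Z sel a (z, j))))
       - (real (Gc Uc a K (\<lambda>_. True) (fmap Z sel a (z', j'))) - real (Gc Uc a K (\<lambda>_. False) (fmap Z sel a (z', j'))))\<bar>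
         \<le> tree_dist Z Uc a (fmap Z sel a (z, j)) (fmap Z sel a (z', j'))"
    by (rule tree_dist_lower[OF cs rpos gpos a PQ fmap_verts[OF a z] fmap_verts[OF a z']])
  thus ?thesis unfolding 0 by simp
qed

end



lemma sum_le_card_sqrt:
  fixes f :: "'a \<Rightarrow> real"
  assumes "finite A" "\<And>a. 0 \<le> f a"
  shows "(\<Sum>a\<in>A. f a) \<le> real (card A) * sqrt (\<Sum>a\<in>A. (f a)^2)"
proof (rule sum_bounded_above)
  fix a assume a: "a \<in> A"
  have "(f a)^2 \<le> (\<Sum>a\<in>A. (f a)^2)" by (rule member_le_sum[OF a]) (auto simp: assms)
  hence "sqrt ((f a)^2) \<le> sqrt (\<Sum>a\<in>A. (f a)^2)" by (rule real_sqrt_le_mono)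
  thus "f a \<le> sqrt (\<Sum>a\<in>A. (f a)^2)" using assms(2)[of a] by simp
qed

lemma real_diff_ge: "real a - real b \<le> real (a - b)"
  by (cases "b \<le> a") (auto simp: of_nat_diff)

lemma fst_fmap: "fst (fmap Z sel a (z, j)) = j"
  unfolding fmap_def by simp

lemma main_bound:
  fixes Z :: "'z::metric_space set" and A :: "'a set" and r \<delta> lam \<gamma> :: real and Uc sel
  assumes dpos: "0 < \<delta>" and gpos: "0 < \<gamma>" and lam1: "1 \<le> lam" and rpos: "0 < r" and r1: "r < 1"
    and lr: "lam * r < \<delta>" and bZ: "bounded Z" and dZ: "0 < diameter Z" and finA: "finite A"
    and cA: "card A = n + 1" and cs: "char_seq Z A r \<delta> lam \<gamma> Uc" and cc: "closest_choice Z A Uc sel"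
  shows "\<exists>\<Lambda>>0. \<exists>\<sigma>\<ge>0. \<forall>z\<in>Z. \<forall>z'\<in>Z. \<forall>j j'::nat.
        cone_dist (pi / diameter Z) z (real j * ln (1 / r)) z' (real j' * ln (1 / r))
          \<le> \<Lambda> * prod_tree_dist Z A Uc sel (z, j) (z', j') + \<sigma>"
proof -
  define R where "R = ln (1 / r)"
  have Rpos: "0 < R" unfolding R_def using rpos r1 by simp
  define \<mu> where "\<mu> = pi / diameter Z"
  have mupos: "0 < \<mu>" unfolding \<mu>_def using dZ by simp
  define C where "C = 2 * lam + 2"
  define c1 where "c1 = ln (pi^2 + (\<mu> * C)^2)"
  have pi1: "1 \<le> pi^2" using pi_gt3 by (smt (verit) one_le_power)
  have ec1: "exp c1 = pi^2 + (\<mu> * C)^2" unfolding c1_def using pi1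
    by (intro exp_ln) (smt (verit) zero_le_power2)
  have c1pos: "0 \<le> c1" unfolding c1_def using pi1 by (smt (verit) ln_ge_zero zero_le_power2)
  define N where "N = real (card A)"
  have Npos: "0 < N" unfolding N_def cA by simp
  have rk: "r ^ k = exp (- (real k * R))" for k
  proof -
    have "R = - ln r" unfolding R_def using rpos by (simp add: ln_div)
    hence "exp (- (real k * R)) = exp (real k * ln r)" by simp
    also have "\<dots> = exp (ln r) ^ k" by (rule exp_of_nat_mult)
    also have "\<dots> = r ^ k" using rpos by simp
    finally show ?thesis by simp
  qed
  have td0: "0 \<le> tree_dist Z Uc a v w" for a v w unfolding tree_dist_def by simp
  have p1: "0 < N * R" using Npos Rpos by simp
  have p2: "0 \<le> 2 * R + c1 + ln 3" using Rpos c1pos by simp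
  have "\<forall>z\<in>Z. \<forall>z'\<in>Z. \<forall>j j'::nat.
        cone_dist (pi / diameter Z) z (real j * ln (1 / r)) z' (real j' * ln (1 / r))
          \<le> N * R * prod_tree_dist Z A Uc sel (z, j) (z', j') + (2 * R + c1 + ln 3)"
  proof (intro ballI allI)
    fix z z' j j' assume z: "z \<in> Z" and z': "z' \<in> Z"
    define \<rho> where "\<rho> = dist z z'"
    define td where "td a = tree_dist Z Uc a (fmap Z sel a (z, j)) (fmap Z sel a (z', j'))" for a
    define S where "S = (\<Sum>a\<in>A. td a)"
    have S0: "0 \<le> S" unfolding S_def td_def using td0 by (simp add: sum_nonneg)
    have SP: "S \<le> N * prod_tree_dist Z A Uc sel (z, j) (z', j')"
    proof -
      have "S \<le> N * sqrt (\<Sum>a\<in>A. (td a)^2)" unfolding S_def N_def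
        by (rule sum_le_card_sqrt[OF finA]) (simp add: td_def td0)
      thus ?thesis unfolding prod_tree_dist_def td_def by simp
    qed
    have \<rho>d: "\<rho> \<le> diameter Z" unfolding \<rho>_def using diameter_bounded_bound[OF bZ z z'] .
    have key: "\<exists>k. k \<le> j \<and> k \<le> j' \<and> (k = 0 \<or> \<rho> \<le> C * r ^ k) \<and> real j + real j' - 2 * real k - 2 \<le> S"
    proof (cases "min j j' = 0 \<or> \<rho> \<le> C * r ^ (min j j')")
      case True
      define m where "m = min j j'"
      have close_one: "real y' - real y - 1 \<le> S"
        if yy: "y \<le> y'" and sw: "(y = j \<and> y' = j' \<and> w = z' \<and> u = z) \<or> (y = j' \<and> y' = j \<and> w = z \<and> u = z')"
        for y y' w u
      proof (cases "y' = 0")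
        case True then show ?thesis using S0 by simp
      next
        case False
        have w: "w \<in> Z" and u: "u \<in> Z" using sw z z' by auto
        have "real y' - real y - 1 \<le> real (y' - Suc y)" using real_diff_ge[of y' "Suc y"] by simp
        also have "\<dots> \<le> (\<Sum>a\<in>A. real (Gc Uc a y (\<lambda>_. True) (fmap Z sel a (w, y'))))"
          using sum_Gc_lower[OF cs rpos gpos r1 lam1 lr bZ cc finA w, of y' y] False by simp
        also have "\<dots> \<le> (\<Sum>a\<in>A. td a)"
        proof (rule sum_mono)
          fix a assume a: "a \<in> A"
          have "real (Gc Uc a y (\<lambda>_. True) (fmap Z sel a (w, y'))) - real (Gc Uc a y (\<lambda>_. True) (fmap Z sel a (u, y)))
             \<le> tree_dist Z Uc a (fmap Z sel a (w, y')) (fmap Z sel a (u, y))"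
            by (rule close_color[OF cs rpos gpos r1 lam1 lr bZ cc a w u])
          moreover have "Gc Uc a y (\<lambda>_. True) (fmap Z sel a (u, y)) = 0"
            by (rule Gc_zero[OF cs rpos gpos r1 lam1 lr bZ cc]) (simp add: fst_fmap)
          moreover have "tree_dist Z Uc a (fmap Z sel a (w, y')) (fmap Z sel a (u, y)) = td a"
            using sw
          proof
            assume "y = j \<and> y' = j' \<and> w = z' \<and> u = z"
            thus ?thesis unfolding td_def using tree_dist_sym[OF cs rpos gpos, where a=a and v="fmap Z sel a (z', j')" and w="fmap Z sel a (z, j)"] by simp
          next
            assume "y = j' \<and> y' = j \<and> w = z \<and> u = z'"
            thus ?thesis unfolding td_def by simp
          qed
          ultimately show "real (Gc Uc a y (\<lambda>_. True) (fmap Z sel a (w, y'))) \<le> td a" by simp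
        qed
        finally show ?thesis unfolding S_def .
      qed
      have "real j + real j' - 2 * real m - 2 \<le> S"
      proof (cases "j \<le> j'")
        case True
        then show ?thesis using close_one[of j j' z' z] unfolding m_def by simp
      next
        case False
        then show ?thesis using close_one[of j' j z z'] unfolding m_def by simp
      qed
      moreover have "m = 0 \<or> \<rho> \<le> C * r ^ m" using True unfolding m_def by blast
      ultimately show ?thesis unfolding m_def by (intro exI[of _ "min j j'"]) auto
    next
      case False
      define m where "m = min j j'"
      have m1: "1 \<le> m" and farm: "C * r ^ m < \<rho>" using False unfolding m_def by auto
      define K where "K = (LEAST k. C * r ^ (k + 1) < \<rho>)"
      have ex: "C * r ^ ((m - 1) + 1) < \<rho>" using m1 farm by simp
      have Km: "K \<le> m - 1" unfolding K_def by (rule Least_le[where P="\<lambda>k. C * r ^ (k + 1) < \<rho>", OF ex])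
      have Kj: "K < j" "K < j'" using Km m1 unfolding m_def by auto
      have j1: "1 \<le> j" "1 \<le> j'" using Kj by auto
      have farK: "C * r ^ (K + 1) < \<rho>" unfolding K_def by (rule LeastI[where P="\<lambda>k. C * r ^ (k + 1) < \<rho>", OF ex])
      have cond: "K = 0 \<or> \<rho> \<le> C * r ^ K"
      proof (cases "K = 0")
        case False
        hence "K - 1 < K" by simp
        hence "\<not> C * r ^ ((K - 1) + 1) < \<rho>" unfolding K_def by (rule not_less_Least)
        thus ?thesis using False by simp
      qed simp
      have "real j + real j' - 2 * real K - 2 \<le> real (j - Suc K) + real (j' - Suc K)"
        using Kj by (simp add: of_nat_diff)
      also have "\<dots> \<le> (\<Sum>a\<in>A. real (Gc Uc a K (\<lambda>_. True) (fmap Z sel a (z, j)))) + (\<Sum>a\<in>A. real (Gc Uc a K (\<lambda>_. True) (fmap Z sel a (z', j'))))"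
        using sum_Gc_lower[OF cs rpos gpos r1 lam1 lr bZ cc finA z j1(1), of K]
          sum_Gc_lower[OF cs rpos gpos r1 lam1 lr bZ cc finA z' j1(2), of K] by simp
      also have "\<dots> \<le> S" unfolding S_def sum.distrib[symmetric]
      proof (rule sum_mono)
        fix a assume a: "a \<in> A"
        show "real (Gc Uc a K (\<lambda>_. True) (fmap Z sel a (z, j))) + real (Gc Uc a K (\<lambda>_. True) (fmap Z sel a (z', j'))) \<le> td a"
          unfolding td_def
          by (rule far_color[OF cs rpos gpos r1 lam1 lr bZ cc a z z' j1 Kj]) (use farK in \<open>simp add: C_def \<rho>_def\<close>)
      qed
      finally show ?thesis using Kj cond by (intro exI[of _ K]) auto
    qed
    then obtain k where k: "k \<le> j" "k \<le> j'" "k = 0 \<or> \<rho> \<le> C * r ^ k"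
      and kS: "real j + real j' - 2 * real k - 2 \<le> S" by blast
    have th: "(\<mu> * \<rho>)^2 \<le> exp c1 * (r ^ k)^2"
    proof (cases "k = 0")
      case True
      have "\<mu> * \<rho> \<le> pi" using \<rho>d mupos dZ unfolding \<mu>_def by (simp add: field_simps)
      hence "(\<mu> * \<rho>)^2 \<le> pi^2" using mupos \<rho>_def by (intro power_mono) auto
      moreover have "0 \<le> (\<mu> * C)^2" by simp
      ultimately show ?thesis using True ec1 by (simp add: add_increasing2)
    next
      case False
      hence "\<rho> \<le> C * r ^ k" using k by simp
      hence "\<mu> * \<rho> \<le> \<mu> * C * r ^ k" using mupos by simp
      hence "(\<mu> * \<rho>)^2 \<le> (\<mu> * C * r ^ k)^2" using mupos \<rho>_def by (intro power_mono) auto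
      also have "\<dots> = (\<mu> * C)^2 * (r ^ k)^2" by (simp add: power_mult_distrib)
      also have "\<dots> \<le> exp c1 * (r ^ k)^2" using ec1 by (intro mult_right_mono) auto
      finally show ?thesis .
    qed
    define M where "M = (real j + real j' - 2 * real k) * R + c1"
    have M1: "\<bar>real j * R - real j' * R\<bar> \<le> M"
    proof -
      have "\<bar>real j * R - real j' * R\<bar> = \<bar>real j - real j'\<bar> * R" using Rpos
        by (simp add: abs_mult left_diff_distrib[symmetric])
      also have "\<dots> \<le> (real j + real j' - 2 * real k) * R" using k Rpos by (intro mult_right_mono) auto
      finally show ?thesis unfolding M_def using c1pos by simp
    qed
    have M2: "exp (real j * R + real j' * R) * (\<mu> * dist z z')^2 \<le> exp M"
    proof -
      have "exp (real j * R + real j' * R) * (\<mu> * dist z z')^2 \<le> exp (real j * R + real j' * R) * (exp c1 * (r ^ k)^2)"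
        using th unfolding \<rho>_def by (intro mult_left_mono) auto
      also have "\<dots> = exp (real j * R + real j' * R + c1 + (- (real k * R)) + (- (real k * R)))"
        unfolding rk exp_add by (simp add: power2_eq_square ac_simps del: exp_minus)
      also have "\<dots> = exp M" unfolding M_def by (simp add: algebra_simps)
      finally show ?thesis .
    qed
    have "cone_dist (pi / diameter Z) z (real j * ln (1 / r)) z' (real j' * ln (1 / r)) \<le> M + ln 3"
      unfolding cone_dist_def R_def[symmetric] \<mu>_def[symmetric]
      by (rule cone_bound) (use Rpos M1 M2 in auto)
    also have "\<dots> \<le> (S + 2) * R + c1 + ln 3" unfolding M_def using kS Rpos
      by (smt (verit) mult_right_mono)
    also have "\<dots> \<le> N * R * prod_tree_dist Z A Uc sel (z, j) (z', j') + (2 * R + c1 + ln 3)"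
      using mult_right_mono[OF SP, of R] Rpos by (simp add: algebra_simps)
    finally show "cone_dist (pi / diameter Z) z (real j * ln (1 / r)) z' (real j' * ln (1 / r))
          \<le> N * R * prod_tree_dist Z A Uc sel (z, j) (z', j') + (2 * R + c1 + ln 3)" .
  qed
  thus ?thesis using p1 p2 by blast
qed


theorem proposition3p6:
  fixes \<delta> \<gamma> lam :: real and n :: nat
  assumes "0 < \<delta>" "\<delta> < 1" "0 < \<gamma>" "\<gamma> < 1" "1 \<le> lam"
  shows "\<exists>r0>0. \<forall>(r::real) (Z::'z::metric_space set) (A::'a set) Uc sel.
     0 < r \<and> r < 1 \<and> r < r0 \<and> lam * r < \<delta> \<and>
     bounded Z \<and> 0 < diameter Z \<and> r < diameter Z \<and>
     finite A \<and> card A = n + 1 \<and>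
     char_seq Z A r \<delta> lam \<gamma> Uc \<and> closest_choice Z A Uc sel \<longrightarrow>
     (\<exists>\<Lambda>>0. \<exists>\<sigma>\<ge>0. \<forall>z\<in>Z. \<forall>z'\<in>Z. \<forall>j j'::nat.
        cone_dist (pi / diameter Z) z (real j * ln (1 / r)) z' (real j' * ln (1 / r))
          \<le> \<Lambda> * prod_tree_dist Z A Uc sel (z, j) (z', j') + \<sigma>)"
  proof -
  have "\<forall>(r::real) (Z::'z::metric_space set) (A::'a set) Uc sel.
     0 < r \<and> r < 1 \<and> r < 1 \<and> lam * r < \<delta> \<and>
     bounded Z \<and> 0 < diameter Z \<and> r < diameter Z \<and>
     finite A \<and> card A = n + 1 \<and>
     char_seq Z A r \<delta> lam \<gamma> Uc \<and> closest_choice Z A Uc sel \<longrightarrow>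
     (\<exists>\<Lambda>>0. \<exists>\<sigma>\<ge>0. \<forall>z\<in>Z. \<forall>z'\<in>Z. \<forall>j j'::nat.
        cone_dist (pi / diameter Z) z (real j * ln (1 / r)) z' (real j' * ln (1 / r))
          \<le> \<Lambda> * prod_tree_dist Z A Uc sel (z, j) (z', j') + \<sigma>)"
  proof (intro allI impI)
    fix r :: real and Z :: "'z::metric_space set" and A :: "'a set" and Uc sel
    assume h: "0 < r \<and> r < 1 \<and> r < 1 \<and> lam * r < \<delta> \<and>
     bounded Z \<and> 0 < diameter Z \<and> r < diameter Z \<and>
     finite A \<and> card A = n + 1 \<and>
     char_seq Z A r \<delta> lam \<gamma> Uc \<and> closest_choice Z A Uc sel"
    show "\<exists>\<Lambda>>0. \<exists>\<sigma>\<ge>0. \<forall>z\<in>Z. \<forall>z'\<in>Z. \<forall>j j'::nat.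
        cone_dist (pi / diameter Z) z (real j * ln (1 / r)) z' (real j' * ln (1 / r))
          \<le> \<Lambda> * prod_tree_dist Z A Uc sel (z, j) (z', j') + \<sigma>"
      using h assms by (intro main_bound[of \<delta> \<gamma> lam r]) auto
  qed
  thus ?thesis by (intro exI[of _ 1]) simp
qed

end
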